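(* Let $A\subseteq\mathbb{R}$ be a closed set with smallest element $\theta_*$, and let $c:A\to\mathbb{R}$ be nondecreasing and left-continuous with $c(\theta_* )=0$ and $c(x)>0$ for all $x\in A$ with $x>\theta_*$; if $A$ is unbounded, assume further that $\inf\{c(x)/x : x\in A,\ x\ge y\}\uparrow\infty$ as $y\uparrow\infty$. Define $\phi(y)=\sup_{x\in A}\{yx-c(x)\}$ for $y\ge 0$, and let $\psi(y)$ be the smallest element of $A$ attaining this supremum. Then: (i) $\psi$ is right-continuous at $0$; (ii) $\phi_*\equiv-\inf\{\phi(y):y\ge0\}<\infty$ if and only if $A$ has a nonnegative element; (iii) if $A$ is unbounded, then $\psi(y)\to\infty$ and $\phi(y)\to\infty$ as $y\to\infty$; (iv) if $A$ is bounded, then $\psi(y)\to\theta^*$ as $y\to\infty$, where $\theta^*\equiv\sup A$.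
   Context: Under the stated assumptions on $A$ and $c$, for every $y\ge0$ the supremum defining $\phi(y)$ is finite and the set of maximizers in $A$ is nonempty and has a smallest element, so $\psi(y)=\inf\arg\max_{x\in A}\{yx-c(x)\}$ is well defined. It is also known that $\psi$ is nondecreasing and left-continuous on $[0,\infty)$ and $\phi(y)=\int_0^y\psi(u)\,du$ for $y\ge 0$. *)

theory Defs
  imports "HOL-Analysis.Analysis"
begin

definition phi :: "real set \<Rightarrow> (real \<Rightarrow> real) \<Rightarrow> real \<Rightarrow> real" where
  "phi A c y = (SUP x\<in>A. y * x - c x)"

definition psi :: "real set \<Rightarrow> (real \<Rightarrow> real) \<Rightarrow> real \<Rightarrow> real" where
  "psi A c y = Inf {x \<in> A. y * x - c x = phi A c y}"

end

theory Submission
  imports Defs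
begin

locale p2 =
  fixes A :: "real set" and c :: "real \<Rightarrow> real" and \<theta> :: real
  assumes closedA: "closed A"
    and theta_in: "\<theta> \<in> A"
    and theta_min: "\<forall>x\<in>A. \<theta> \<le> x"
    and c_mono: "mono_on A c"
    and c_leftcont: "\<forall>x\<in>A. continuous (at x within (A \<inter> {..x})) c"
    and c_theta: "c \<theta> = 0"
    and c_pos: "\<forall>x\<in>A. x > \<theta> \<longrightarrow> c x > 0"
    and growth: "\<not> bounded A \<Longrightarrow>
       filterlim (\<lambda>y. Inf ((\<lambda>x. c x / x) ` {x \<in> A. y \<le> x})) at_top at_top"
begin

lemma c_nonneg: "x \<in> A \<Longrightarrow> c x \<ge> 0"
  using mono_onD[OF c_mono theta_in, of x] theta_min c_theta by auto

lemma unbounded_big: assumes "\<not> bounded A" shows "\<exists>x\<in>A. x \<ge> Z"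
proof (rule ccontr)
  assume "\<not> ?thesis"
  then have "\<forall>x\<in>A. \<bar>x\<bar> \<le> max \<bar>\<theta>\<bar> \<bar>Z\<bar>" using theta_min by force
  then show False using assms bounded_real by blast
qed

lemma coercive:
  assumes y: "y \<ge> 0"
  shows "\<exists>B. B \<ge> \<theta> + 1 \<and> (\<forall>x\<in>A. x \<ge> B \<longrightarrow> y*x - c x < y*\<theta>)"
proof (cases "bounded A")
  case True
  then have "bdd_above A" by (rule bounded_imp_bdd_above)
  then have "\<forall>x\<in>A. x \<le> Sup A" by (simp add: cSup_upper)
  then show ?thesis
    by (intro exI[of _ "max (Sup A + 1) (\<theta>+1)"]) force
next
  case False
  from growth[OF False] have "\<forall>\<^sub>F t in at_top. y + 1 \<le> Inf ((\<lambda>x. c x / x) ` {x \<in> A. t \<le> x})"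
    by (simp add: filterlim_at_top)
  then obtain N where N: "\<And>t. t \<ge> N \<Longrightarrow> y + 1 \<le> Inf ((\<lambda>x. c x / x) ` {x \<in> A. t \<le> x})"
    by (auto simp: eventually_at_top_linorder)
  define t where "t = max N (max 1 (\<bar>y*\<theta>\<bar> + 1))"
  have tN: "y + 1 \<le> Inf ((\<lambda>x. c x / x) ` {x \<in> A. t \<le> x})" by (rule N) (simp add: t_def)
  show ?thesis
  proof (intro exI[of _ "max t (\<theta>+1)"] conjI ballI impI)
    fix x assume x: "x \<in> A" "max t (\<theta> + 1) \<le> x"
    have xpos: "x \<ge> 1" "x > \<bar>y*\<theta>\<bar>" using x t_def by auto
    have bdd: "bdd_below ((\<lambda>x. c x / x) ` {x \<in> A. t \<le> x})"
    proof (rule bdd_belowI[of _ 0])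
      fix z assume "z \<in> (\<lambda>x. c x / x) ` {x \<in> A. t \<le> x}"
      then obtain w where "w \<in> A" "t \<le> w" "z = c w / w" by auto
      moreover have "w > 0" using \<open>t \<le> w\<close> t_def by auto
      ultimately show "0 \<le> z" using c_nonneg by auto
    qed
    have "Inf ((\<lambda>x. c x / x) ` {x \<in> A. t \<le> x}) \<le> c x / x"
      by (rule cInf_lower[OF _ bdd]) (use x in auto)
    with tN have "y + 1 \<le> c x / x" by linarith
    then have "(y+1) * x \<le> c x" using xpos by (simp add: pos_le_divide_eq)
    then show "y*x - c x < y*\<theta>" using xpos by (simp add: algebra_simps)
  qed simp
qed

lemma bdd_f: assumes y: "y \<ge> 0" shows "bdd_above ((\<lambda>x. y*x - c x) ` A)"
proof -
  obtain B where B: "B \<ge> \<theta> + 1" "\<forall>x\<in>A. x \<ge> B \<longrightarrow> y*x - c x < y*\<theta>"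
    using coercive[OF y] by blast
  show ?thesis
  proof (rule bdd_aboveI[of _ "max (y*B) (y*\<theta>)"])
    fix z assume "z \<in> (\<lambda>x. y*x - c x) ` A"
    then obtain x where x: "x \<in> A" "z = y*x - c x" by auto
    show "z \<le> max (y*B) (y*\<theta>)"
    proof (cases "x \<ge> B")
      case True then show ?thesis using B x by force
    next
      case False
      then have "y*x \<le> y*B" using y by (simp add: mult_left_mono)
      then show ?thesis using x c_nonneg[of x] by auto
    qed
  qed
qed

lemma phi_ge: "y \<ge> 0 \<Longrightarrow> x \<in> A \<Longrightarrow> y*x - c x \<le> phi A c y"
  unfolding phi_def by (rule cSUP_upper[OF _ bdd_f])

lemma phi_le: "(\<And>x. x \<in> A \<Longrightarrow> y*x - c x \<le> M) \<Longrightarrow> phi A c y \<le> M"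
  unfolding phi_def by (rule cSUP_least) (use theta_in in auto)

lemma lsc: assumes l: "l \<in> A" and e: "e > 0"
  shows "\<exists>d>0. \<forall>x\<in>A. \<bar>x - l\<bar> < d \<longrightarrow> c l - e < c x"
proof -
  from c_leftcont l have "continuous (at l within (A \<inter> {..l})) c" by blast
  then obtain d where d: "d > 0" "\<forall>x'\<in>A \<inter> {..l}. dist x' l < d \<longrightarrow> dist (c x') (c l) < e"
    using e unfolding continuous_within_eps_delta by blast
  show ?thesis
  proof (intro exI[of _ d] conjI ballI impI)
    fix x assume x: "x \<in> A" "\<bar>x - l\<bar> < d"
    show "c l - e < c x"
    proof (cases "x \<le> l")
      case True
      then have "dist (c x) (c l) < e" using d x by (auto simp: dist_real_def)
      then show ?thesis by (auto simp: dist_real_def)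
    next
      case False
      then show ?thesis using mono_onD[OF c_mono l x(1)] e by auto
    qed
  qed (use d in auto)
qed

lemma argmax_ex: assumes y: "y \<ge> 0" shows "\<exists>x\<in>A. y*x - c x = phi A c y"
proof -
  obtain B where B: "B \<ge> \<theta> + 1" "\<forall>x\<in>A. x \<ge> B \<longrightarrow> y*x - c x < y*\<theta>"
    using coercive[OF y] by blast
  define s where "s = phi A c y"
  have "\<exists>x. x \<in> A \<and> x \<le> B \<and> s - 1/(real n+1) < y*x - c x" for n :: nat
  proof -
    have "s - 1/(real n+1) < (SUP x\<in>A. y*x - c x)" unfolding s_def phi_def
      by (simp add: add_pos_pos)
    then obtain x where x: "x \<in> A" "s - 1/(real n+1) < y*x - c x"
      using less_cSUP_iff[OF _ bdd_f[OF y]] theta_in by blast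
    show ?thesis
    proof (cases "x \<ge> B")
      case True
      then have "y*x - c x < y*\<theta> - c \<theta>" using B x c_theta by auto
      then show ?thesis using x theta_in B by (intro exI[of _ \<theta>]) auto
    next
      case False then show ?thesis using x by (intro exI[of _ x]) auto
    qed
  qed
  then obtain g where g: "\<And>n. g n \<in> A" "\<And>n. g n \<le> B" "\<And>n. s - 1/(real n+1) < y*g n - c (g n)"
    by metis
  define K where "K = A \<inter> {..B}"
  have "K \<subseteq> {\<theta>..B}" using theta_min K_def by auto
  then have "bounded K" using bounded_subset bounded_closed_interval by blast
  moreover have "closed K" unfolding K_def using closedA by (intro closed_Int) auto
  ultimately have "compact K" by (simp add: compact_eq_bounded_closed)
  then have "seq_compact K" by (rule compact_imp_seq_compact)
  moreover have "\<forall>n. g n \<in> K" using g K_def by auto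
  ultimately obtain l r where l: "l \<in> K" "strict_mono r" "(g \<circ> r) \<longlonglongrightarrow> l"
    unfolding seq_compact_def by blast
  have lA: "l \<in> A" using l K_def by auto
  have "y*l - c l \<ge> s"
  proof (rule ccontr)
    assume "\<not> ?thesis"
    define e where "e = (s - (y*l - c l))/4"
    have e: "e > 0" using \<open>\<not> _\<close> e_def by auto
    obtain d where d: "d > 0" "\<forall>x\<in>A. \<bar>x - l\<bar> < d \<longrightarrow> c l - e < c x"
      using lsc[OF lA e] by blast
    define d' where "d' = min d (e/(\<bar>y\<bar>+1))"
    have d': "d' > 0" using d e d'_def by auto
    obtain N1 where N1: "\<And>n. n \<ge> N1 \<Longrightarrow> dist ((g \<circ> r) n) l < d'"
      using l(3) d' unfolding tendsto_iff eventually_sequentially by blast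
    obtain N0 :: nat where N0: "1/e < real N0" using reals_Archimedean2 by blast
    define n where "n = max N0 N1"
    define x where "x = g (r n)"
    have "n \<le> r n" using seq_suble[OF l(2)] by blast
    then have "real N0 \<le> real (r n)" unfolding n_def by linarith
    then have "1/e < real (r n) + 1" using N0 by linarith
    then have "1 < e * (real (r n) + 1)" using e by (simp add: field_simps)
    then have h1: "1/(real (r n) + 1) < e" by (simp add: field_simps)
    have xl: "\<bar>x - l\<bar> < d'" using N1[of n] unfolding n_def x_def by (simp add: dist_real_def)
    have h2: "c l - e < c x" using d xl d'_def x_def g(1) by auto
    have "\<bar>y\<bar> * \<bar>x - l\<bar> \<le> \<bar>y\<bar> * (e/(\<bar>y\<bar>+1))"
      using xl d'_def by (intro mult_left_mono) auto
    also have "\<dots> \<le> e" using e by (simp add: field_simps)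
    finally have "\<bar>y * (x - l)\<bar> \<le> e" by (simp add: abs_mult)
    then have h3: "y*x \<le> y*l + e" by (simp add: right_diff_distrib abs_le_iff)
    have "s - 1/(real (r n)+1) < y*x - c x" using g(3) x_def by simp
    moreover define q where "q = 1/(real (r n)+1)"
    ultimately have "s - q < y*x - c x" "q < e" using h1 by auto
    then have "s < y*l - c l + 3*e" using h2 h3 by linarith
    then show False using e unfolding e_def by (simp add: field_simps)
  qed
  moreover have "y*l - c l \<le> s" unfolding s_def by (rule phi_ge[OF y lA])
  ultimately show ?thesis using lA s_def by (intro bexI[of _ l]) auto
qed

lemma psi_le: "y \<ge> 0 \<Longrightarrow> x \<in> A \<Longrightarrow> y*x - c x = phi A c y \<Longrightarrow> psi A c y \<le> x"
  unfolding psi_def by (rule cInf_lower) (use theta_min in \<open>auto intro!: bdd_belowI\<close>)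

lemma psi_ge: assumes y: "y \<ge> 0" and Z: "\<And>x. x \<in> A \<Longrightarrow> y*x - c x = phi A c y \<Longrightarrow> Z \<le> x"
  shows "Z \<le> psi A c y"
  unfolding psi_def by (rule cInf_greatest) (use argmax_ex[OF y] Z in auto)

lemma psi_ge_theta: "y \<ge> 0 \<Longrightarrow> \<theta> \<le> psi A c y"
  by (rule psi_ge) (use theta_min in auto)

lemma phi0: "phi A c 0 = 0"
proof -
  have "phi A c 0 \<le> 0" by (rule phi_le) (use c_nonneg in auto)
  moreover have "0*\<theta> - c \<theta> \<le> phi A c 0" by (rule phi_ge) (use theta_in in auto)
  ultimately show ?thesis using c_theta by auto
qed

lemma psi0: "psi A c 0 = \<theta>"
  using psi_le[of 0 \<theta>] psi_ge_theta[of 0] phi0 c_theta theta_in by auto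

lemma part1: "continuous (at_right 0) (psi A c)"
  unfolding continuous_within psi0 tendsto_iff eventually_at_right_field
proof (intro allI impI)
  fix \<epsilon> :: real assume \<epsilon>: "\<epsilon> > 0"
  obtain B where B: "B \<ge> \<theta> + 1" "\<forall>x\<in>A. x \<ge> B \<longrightarrow> 1*x - c x < 1*\<theta>"
    using coercive[of 1] by auto
  define T where "T = A \<inter> {\<theta>+\<epsilon>/2..}"
  have "\<exists>y0>0. \<forall>y x. 0 < y \<longrightarrow> y < y0 \<longrightarrow> x \<in> A \<longrightarrow> y*x - c x = phi A c y \<longrightarrow> x \<le> \<theta> + \<epsilon>/2"
  proof (cases "T = {}")
    case True
    then show ?thesis unfolding T_def by (intro exI[of _ 1]) force
  next
    case False
    define a where "a = Inf T"
    have "closed T" unfolding T_def using closedA by (intro closed_Int) auto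
    moreover have bT: "bdd_below T" unfolding T_def by (auto intro!: bdd_belowI)
    ultimately have aT: "a \<in> T" using closed_contains_Inf False a_def by blast
    have aT2: "\<And>x. x \<in> T \<Longrightarrow> a \<le> x" unfolding a_def using bT by (simp add: cInf_lower)
    have ca: "c a > 0" using aT c_pos \<epsilon> unfolding T_def by auto
    have Bt: "B - \<theta> > 0" using B by auto
    show ?thesis
    proof (intro exI[of _ "min 1 (c a / (B - \<theta>))"] conjI allI impI)
      show "0 < min 1 (c a / (B - \<theta>))" using ca Bt by auto
      fix y x assume y: "0 < y" "y < min 1 (c a / (B - \<theta>))" and x: "x \<in> A" "y*x - c x = phi A c y"
      show "x \<le> \<theta> + \<epsilon>/2"
      proof (rule ccontr)
        assume "\<not> ?thesis"
        then have "x \<in> T" using x T_def by auto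
        then have cx: "c a \<le> c x" using aT2 mono_onD[OF c_mono] aT x T_def by auto
        have phit: "y*\<theta> \<le> phi A c y" using phi_ge[of y \<theta>] y theta_in c_theta by auto
        have xB: "x < B"
        proof (rule ccontr)
          assume "\<not> x < B"
          then have "c x > x - \<theta>" using B x by auto
          moreover have "(1-y)*(x-\<theta>) \<ge> 0" using y theta_min x by auto
          ultimately have "y*x - c x < y*\<theta>" by (simp add: algebra_simps)
          then show False using phit x by auto
        qed
        have "c x \<le> y*(x-\<theta>)" using phit x by (simp add: algebra_simps)
        also have "\<dots> \<le> y*(B-\<theta>)" using xB y by (intro mult_left_mono) auto
        also have "\<dots> < c a" using y Bt by (simp add: pos_less_divide_eq)
        finally show False using cx by auto
      qed
    qed
  qed
  then obtain y0 where y0: "y0 > 0" "\<And>y x. 0 < y \<Longrightarrow> y < y0 \<Longrightarrow> x \<in> A \<Longrightarrow> y*x - c x = phi A c y \<Longrightarrow> x \<le> \<theta> + \<epsilon>/2"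
    by blast
  show "\<exists>b>0. \<forall>y>0. y < b \<longrightarrow> dist (psi A c y) \<theta> < \<epsilon>"
  proof (intro exI[of _ y0] conjI allI impI)
    fix y :: real assume y: "0 < y" "y < y0"
    obtain x where x: "x \<in> A" "y*x - c x = phi A c y" using argmax_ex[of y] y by auto
    have "psi A c y \<le> x" using psi_le x y by auto
    moreover have "x \<le> \<theta> + \<epsilon>/2" using y0(2)[OF y x] .
    moreover have "\<theta> \<le> psi A c y" using psi_ge_theta y by auto
    ultimately show "dist (psi A c y) \<theta> < \<epsilon>" using \<epsilon> by (simp add: dist_real_def)
  qed (use y0 in auto)
qed

lemma part2: "- (INF y\<in>{0..}. ereal (phi A c y)) < \<infinity> \<longleftrightarrow> (\<exists>x\<in>A. x \<ge> 0)"
proof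
  assume h: "- (INF y\<in>{0..}. ereal (phi A c y)) < \<infinity>"
  show "\<exists>x\<in>A. x \<ge> 0"
  proof (rule ccontr)
    assume "\<not> ?thesis"
    then have neg: "\<forall>x\<in>A. x < 0" by auto
    have bA: "bdd_above A" using neg by (auto intro!: bdd_aboveI[of _ 0] less_imp_le)
    define m where "m = Sup A"
    have mA: "m \<in> A" unfolding m_def using closed_contains_Sup[OF _ bA closedA] theta_in by auto
    have m0: "m < 0" using neg mA by auto
    have xm: "\<And>x. x \<in> A \<Longrightarrow> x \<le> m" unfolding m_def using bA by (simp add: cSup_upper)
    have "(INF y\<in>{0..}. ereal (phi A c y)) = - \<infinity>"
    proof (rule ereal_bot)
      fix r :: real
      define y where "y = max 0 (r/m)"
      have y0: "y \<ge> 0" using y_def by auto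
      have "phi A c y \<le> y*m"
      proof (rule phi_le)
        fix x assume "x \<in> A"
        then show "y*x - c x \<le> y*m" using xm[of x] c_nonneg[of x] y0 mult_left_mono[of x m y] by auto
      qed
      also have "y*m \<le> r"
      proof (cases "r/m \<le> 0")
        case True
        then have "r \<ge> 0" using m0 by (simp add: divide_le_0_iff) 
        then show ?thesis using True y_def by auto
      next
        case False
        then have "y = r/m" using y_def by auto
        then show ?thesis using m0 by auto
      qed
      finally have "ereal (phi A c y) \<le> ereal r" by simp
      moreover have "(INF y\<in>{0..}. ereal (phi A c y)) \<le> ereal (phi A c y)"
        using y0 by (intro INF_lower) auto
      ultimately show "(INF y\<in>{0..}. ereal (phi A c y)) \<le> ereal r" by (rule order.trans[rotated])
    qed
    then show False using h by simp
  qed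
next
  assume "\<exists>x\<in>A. x \<ge> 0"
  then obtain x where x: "x \<in> A" "x \<ge> 0" by blast
  have "ereal (- c x) \<le> (INF y\<in>{0..}. ereal (phi A c y))"
  proof (rule INF_greatest)
    fix y :: real assume "y \<in> {0..}"
    then have "y*x - c x \<le> phi A c y" "y * x \<ge> 0" using phi_ge x by auto
    then show "ereal (- c x) \<le> ereal (phi A c y)" by simp
  qed
  then have "- (INF y\<in>{0..}. ereal (phi A c y)) \<le> ereal (c x)"
    by (metis ereal_minus_le_minus ereal_uminus_uminus uminus_ereal.simps(1))
  then show "- (INF y\<in>{0..}. ereal (phi A c y)) < \<infinity>"
    using le_less_trans by fastforce
qed

lemma part3: assumes nb: "\<not> bounded A"
  shows "filterlim (psi A c) at_top at_top \<and> filterlim (phi A c) at_top at_top"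
proof
  show "filterlim (psi A c) at_top at_top"
    unfolding filterlim_at_top eventually_at_top_linorder
  proof
    fix Z :: real
    obtain x1 where x1: "x1 \<in> A" "x1 \<ge> Z + 1" using unbounded_big[OF nb] by blast
    show "\<exists>N. \<forall>y\<ge>N. Z \<le> psi A c y"
    proof (intro exI[of _ "c x1 + 1"] allI impI)
      fix y assume y: "y \<ge> c x1 + 1"
      have y0: "y \<ge> 0" using y c_nonneg[OF x1(1)] by auto
      show "Z \<le> psi A c y"
      proof (rule psi_ge[OF y0])
        fix x assume x: "x \<in> A" "y*x - c x = phi A c y"
        show "Z \<le> x"
        proof (rule ccontr)
          assume "\<not> Z \<le> x"
          then have "y*x \<le> y*Z" using y0 by (intro mult_left_mono) auto
          moreover have "y*(Z+1) \<le> y*x1" using y0 x1 by (intro mult_left_mono) auto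
          moreover have "y*x1 - c x1 \<le> phi A c y" using phi_ge y0 x1 by auto
          ultimately show False using x c_nonneg[of x] y by (simp add: algebra_simps)
        qed
      qed
    qed
  qed
  show "filterlim (phi A c) at_top at_top"
    unfolding filterlim_at_top eventually_at_top_linorder
  proof
    fix Z :: real
    obtain x1 where x1: "x1 \<in> A" "x1 \<ge> 1" using unbounded_big[OF nb] by blast
    show "\<exists>N. \<forall>y\<ge>N. Z \<le> phi A c y"
    proof (intro exI[of _ "max 0 (Z + c x1)"] allI impI)
      fix y assume y: "max 0 (Z + c x1) \<le> y"
      have "y*1 \<le> y*x1" using y x1 by (intro mult_left_mono) auto
      moreover have "y*x1 - c x1 \<le> phi A c y" using phi_ge y x1 by auto
      ultimately show "Z \<le> phi A c y" using y by auto
    qed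
  qed
qed

lemma part4_aux: assumes b: "bounded A" and e: "e > 0"
  shows "\<exists>N. \<forall>y\<ge>N. Sup A - e \<le> psi A c y \<and> psi A c y \<le> Sup A"
proof -
  have bA: "bdd_above A" using b by (rule bounded_imp_bdd_above)
  obtain x1 where x1: "x1 \<in> A" "Sup A - e/2 < x1"
    using less_cSupE[of "Sup A - e/2" A] theta_in e by force
  show ?thesis
  proof (intro exI[of _ "2 * c x1 / e + 1"] allI impI conjI)
    fix y assume y: "2 * c x1 / e + 1 \<le> y"
    have "2 * c x1 / e \<ge> 0" using c_nonneg[OF x1(1)] e by auto
    then have y0: "y \<ge> 0" using y by auto
    have yc: "y * e > 2 * c x1" using y e by (simp add: field_simps)
    show "Sup A - e \<le> psi A c y"
    proof (rule psi_ge[OF y0])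
      fix x assume x: "x \<in> A" "y*x - c x = phi A c y"
      show "Sup A - e \<le> x"
      proof (rule ccontr)
        assume "\<not> Sup A - e \<le> x"
        then have "y*x \<le> y*(Sup A - e)" using y0 by (intro mult_left_mono) auto
        moreover have "y*(Sup A - e/2) \<le> y*x1" using y0 x1 by (intro mult_left_mono) auto
        moreover have "y*x1 - c x1 \<le> phi A c y" using phi_ge y0 x1 by auto
        ultimately show False using x c_nonneg[of x] yc by (simp add: algebra_simps)
      qed
    qed
    obtain x where x: "x \<in> A" "y*x - c x = phi A c y" using argmax_ex[OF y0] by auto
    have "x \<le> Sup A" using bA x by (simp add: cSup_upper)
    then show "psi A c y \<le> Sup A" using psi_le[OF y0 x] by auto
  qed
qed

lemma part4: assumes b: "bounded A" shows "(psi A c \<longlongrightarrow> Sup A) at_top"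
  unfolding tendsto_iff eventually_at_top_linorder
proof (intro allI impI)
  fix e :: real assume e: "e > 0"
  then obtain N where N: "\<forall>y\<ge>N. Sup A - e/2 \<le> psi A c y \<and> psi A c y \<le> Sup A"
    using part4_aux[OF b, of "e/2"] by auto
  show "\<exists>N. \<forall>n\<ge>N. dist (psi A c n) (Sup A) < e"
    using N e by (intro exI[of _ N]) (auto simp: dist_real_def)
qed

end

theorem proposition2:
  fixes A :: "real set" and c :: "real \<Rightarrow> real" and \<theta> :: real
  assumes closedA: "closed A"
    and theta_in: "\<theta> \<in> A"
    and theta_min: "\<forall>x\<in>A. \<theta> \<le> x"
    and c_mono: "mono_on A c"
    and c_leftcont: "\<forall>x\<in>A. continuous (at x within (A \<inter> {..x})) c"
    and c_theta: "c \<theta> = 0"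
    and c_pos: "\<forall>x\<in>A. x > \<theta> \<longrightarrow> c x > 0"
    and growth: "\<not> bounded A \<Longrightarrow>
       filterlim (\<lambda>y. Inf ((\<lambda>x. c x / x) ` {x \<in> A. y \<le> x})) at_top at_top"
  shows "continuous (at_right 0) (psi A c)
     \<and> (- (INF y\<in>{0..}. ereal (phi A c y)) < \<infinity> \<longleftrightarrow> (\<exists>x\<in>A. x \<ge> 0))
     \<and> (\<not> bounded A \<longrightarrow>
           filterlim (psi A c) at_top at_top \<and> filterlim (phi A c) at_top at_top)
     \<and> (bounded A \<longrightarrow> (psi A c \<longlongrightarrow> Sup A) at_top)"
proof -
  interpret p2 A c \<theta>
    using assms by unfold_locales auto
  show ?thesis using part1 part2 part3 part4 by blast
qed

end
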